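(* Fix integers $n,d,k,L\ge1$. Consider the normalized linear Transformer acting on $Z_l\in\mathbb{R}^{(d+k)\times n}$ by $$\hat Z_{l+1}=Z_l+W^V_l Z_l Z_l^\top (W^Q_l)^\top W^K_l Z_l+W^R_l Z_l,\qquad Z_{l+1}=\mathrm{normalize}(\hat Z_{l+1}),$$ with weights in $\mathbb{R}^{(d+k)\times(d+k)}$, where $\mathrm{normalize}$ replaces each row $j\in\{d+1,\dots,d+k\}$ of its argument by that row divided by its Euclidean norm (and leaves rows $1,\dots,d$ unchanged). Write $Z_l^\top=\begin{bmatrix}B_l, & \Phi_l\end{bmatrix}$ with $B_l\in\mathbb{R}^{n\times d}$, $\Phi_l\in\mathbb{R}^{n\times k}$, and initialize $B_0=B$, the incidence matrix of a graph, and $\Phi_0$ an arbitrary matrix of full column rank. Then there exists a choice of $W^V,W^Q,W^K,W^R$ such that every $k+1$ consecutive layers of the Transformer implement one iteration of subspace iteration for the Laplacian $\mathcal{L}=BB^\top$ (namely $\Phi\mapsto \mathrm{QR}(\mathcal{L}\Phi)$, where $\mathrm{QR}(M)$ is the $Q$ factor of a QR decomposition of $M$). Consequently, the output $\Phi_L$ of an $L$-layer Transformer approximates the top-$k$ eigenvectors of $\mathcal{L}$ to the same accuracy as $L/(k+1)$ steps of subspace iteration started from $\Phi_0$.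
   Context: A graph has $n$ vertices, $d$ edges and positive edge resistances $r_j$; graphs are connected. With an arbitrary edge orientation, the incidence matrix $B\in\mathbb{R}^{n\times d}$ has $B_{ij}=-1/\sqrt{r_j}$ if $e_j$ leaves vertex $i$, $+1/\sqrt{r_j}$ if it enters vertex $i$, and $0$ otherwise; $\mathcal{L}=BB^\top$. Subspace iteration (block power method): start from $\Phi_0\in\mathbb{R}^{n\times k}$ of full column rank and repeat $\hat\Phi_{i+1}=\mathcal{L}\Phi_i$, $\Phi_{i+1}=\mathrm{QR}(\hat\Phi_{i+1})$. *)

theory Defs
  imports "Jordan_Normal_Form.Matrix"
begin

definition graph_edges :: "nat \<Rightarrow> (nat \<Rightarrow> nat) \<Rightarrow> (nat \<Rightarrow> nat) \<Rightarrow> (nat \<times> nat) set" where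
  "graph_edges d src tgt = {(src j, tgt j) | j. j < d} \<union> {(tgt j, src j) | j. j < d}"

definition is_conn_graph :: "nat \<Rightarrow> nat \<Rightarrow> (nat \<Rightarrow> nat) \<Rightarrow> (nat \<Rightarrow> nat) \<Rightarrow> (nat \<Rightarrow> real) \<Rightarrow> bool" where
  "is_conn_graph n d src tgt r \<longleftrightarrow>
     (\<forall>j<d. src j < n \<and> tgt j < n \<and> src j \<noteq> tgt j \<and> r j > 0) \<and>
     (\<forall>u<n. \<forall>v<n. (u, v) \<in> (graph_edges d src tgt)\<^sup>*)"

definition incidence_mat :: "nat \<Rightarrow> nat \<Rightarrow> (nat \<Rightarrow> nat) \<Rightarrow> (nat \<Rightarrow> nat) \<Rightarrow> (nat \<Rightarrow> real) \<Rightarrow> real mat" where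
  "incidence_mat n d src tgt r = mat n d (\<lambda>(i, j).
      if i = src j then - 1 / sqrt (r j) else if i = tgt j then 1 / sqrt (r j) else 0)"

definition full_col_rank :: "real mat \<Rightarrow> bool" where
  "full_col_rank M \<longleftrightarrow>
     (\<forall>x \<in> carrier_vec (dim_col M). M *\<^sub>v x = 0\<^sub>v (dim_row M) \<longrightarrow> x = 0\<^sub>v (dim_col M))"

text \<open>QR decomposition M = Q R with Q having orthonormal columns and R upper triangular
  with positive diagonal; QR_Q M is its (unique, for full column rank M) Q factor.\<close>

definition is_QR :: "real mat \<Rightarrow> real mat \<Rightarrow> real mat \<Rightarrow> bool" where
  "is_QR M Q R \<longleftrightarrow> Q \<in> carrier_mat (dim_row M) (dim_col M) \<and>
     R \<in> carrier_mat (dim_col M) (dim_col M) \<and>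
     transpose_mat Q * Q = 1\<^sub>m (dim_col M) \<and>
     (\<forall>i<dim_col M. \<forall>j<dim_col M. j < i \<longrightarrow> R $$ (i, j) = 0) \<and>
     (\<forall>i<dim_col M. R $$ (i, i) > 0) \<and>
     M = Q * R"

definition QR_Q :: "real mat \<Rightarrow> real mat" where
  "QR_Q M = (THE Q. \<exists>R. is_QR M Q R)"

primrec subspace_iter :: "real mat \<Rightarrow> real mat \<Rightarrow> nat \<Rightarrow> real mat" where
  "subspace_iter Lap Phi0 0 = Phi0"
| "subspace_iter Lap Phi0 (Suc m) = QR_Q (Lap * subspace_iter Lap Phi0 m)"

text \<open>normalize: rows with (0-based) index \<ge> d are divided by their Euclidean norm.\<close>

definition row_norm :: "real mat \<Rightarrow> nat \<Rightarrow> real" where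
  "row_norm M i = sqrt (\<Sum>j<dim_col M. (M $$ (i, j))\<^sup>2)"

definition normalize_rows :: "nat \<Rightarrow> real mat \<Rightarrow> real mat" where
  "normalize_rows d M = mat (dim_row M) (dim_col M)
      (\<lambda>(i, j). if i < d then M $$ (i, j) else M $$ (i, j) / row_norm M i)"

primrec tf_state :: "nat \<Rightarrow> (nat \<Rightarrow> real mat) \<Rightarrow> (nat \<Rightarrow> real mat) \<Rightarrow> (nat \<Rightarrow> real mat)
    \<Rightarrow> (nat \<Rightarrow> real mat) \<Rightarrow> real mat \<Rightarrow> nat \<Rightarrow> real mat" where
  "tf_state d WV WQ WK WR Z0 0 = Z0"
| "tf_state d WV WQ WK WR Z0 (Suc l) =
     (let Z = tf_state d WV WQ WK WR Z0 l in
      normalize_rows d (Z + WV l * Z * transpose_mat Z * transpose_mat (WQ l) * WK l * Z + WR l * Z))"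

definition init_Z :: "nat \<Rightarrow> nat \<Rightarrow> nat \<Rightarrow> real mat \<Rightarrow> real mat \<Rightarrow> real mat" where
  "init_Z n d k B Phi = transpose_mat (mat n (d + k) (\<lambda>(i, j). if j < d then B $$ (i, j) else Phi $$ (i, j - d)))"

definition B_part :: "nat \<Rightarrow> real mat \<Rightarrow> real mat" where
  "B_part d Z = mat (dim_col Z) d (\<lambda>(i, j). Z $$ (j, i))"

definition Phi_part :: "nat \<Rightarrow> nat \<Rightarrow> real mat \<Rightarrow> real mat" where
  "Phi_part d k Z = mat (dim_col Z) k (\<lambda>(i, j). Z $$ (d + j, i))"

end

theory Submission imports Defs begin

definition dg :: "nat \<Rightarrow> (nat \<Rightarrow> real) \<Rightarrow> real mat" where
  "dg N f = mat N N (\<lambda>(i,j). if i = j then f i else 0)"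

lemma dg_carrier[simp]: "dg N f \<in> carrier_mat N N" and dg_dims[simp]: "dim_row (dg N f) = N" "dim_col (dg N f) = N"
  by (auto simp: dg_def)

lemma sum_single: fixes k :: nat assumes "i < k" "\<And>l. l < k \<Longrightarrow> l \<noteq> i \<Longrightarrow> f l = 0"
  shows "(\<Sum>l<k. f l) = (f i :: real)"
proof -
  have "(\<Sum>l<k. f l) = f i + (\<Sum>l\<in>{..<k} - {i}. f l)"
    using assms(1) by (subst sum.remove[of _ i]) auto
  also have "(\<Sum>l\<in>{..<k} - {i}. f l) = 0" using assms(2) by (intro sum.neutral) auto
  finally show ?thesis by simp
qed

lemma sum_delta_mult: "finite A \<Longrightarrow> (\<Sum>l\<in>A. (if i = l then f l else 0) * g l) = (if i \<in> A then f i * g i else (0::real))"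
  by (simp add: if_distrib[where f="\<lambda>x. x * _"] sum.delta cong: if_cong)

lemma sum_delta_mult': "finite A \<Longrightarrow> (\<Sum>l\<in>A. g l * (if l = j then f l else 0)) = (if j \<in> A then g j * f j else (0::real))"
  by (simp add: if_distrib[where f="\<lambda>x. _ * x"] sum.delta' cong: if_cong)

lemma layer_entry:
  assumes Z: "Z \<in> carrier_mat D n" and a: "a < D" and c: "c < n"
  shows "(Z + dg D v * Z * transpose_mat Z * transpose_mat (1\<^sub>m D) * dg D w * Z + dg D r * Z) $$ (a, c)
   = Z $$ (a,c) + v a * (\<Sum>b<D. (\<Sum>x<n. Z $$ (a,x) * Z $$ (b,x)) * w b * Z $$ (b,c)) + r a * Z $$ (a,c)"
proof -
  have e1: "dg D v * Z = mat D n (\<lambda>(i,j). v i * Z $$ (i,j))"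
    using Z by (intro eq_matI) (auto simp: dg_def scalar_prod_def sum_delta_mult)
  have e2: "dg D v * Z * transpose_mat Z = mat D D (\<lambda>(i,b). v i * (\<Sum>x<n. Z $$ (i,x) * Z $$ (b,x)))"
    using Z by (intro eq_matI) (auto simp: e1 scalar_prod_def sum_distrib_left mult.assoc atLeast0LessThan)
  have e4: "dg D v * Z * transpose_mat Z * transpose_mat (1\<^sub>m D) * dg D w = mat D D (\<lambda>(i,b). v i * (\<Sum>x<n. Z $$ (i,x) * Z $$ (b,x)) * w b)"
    using Z unfolding e2 by (intro eq_matI) (auto simp: dg_def scalar_prod_def sum_delta_mult')
  show ?thesis
 using Z a c unfolding e4 apply (auto simp:  scalar_prod_def sum_distrib_left mult.assoc atLeast0LessThan dg_def sum_delta_mult)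
    apply (intro sum.cong refl)
    by (simp add: sum_distrib_left sum_distrib_right mult_ac)
qed

definition vV :: "nat \<Rightarrow> nat \<Rightarrow> nat \<Rightarrow> nat \<Rightarrow> real" where
 "vV d k l a = (if l mod Suc k = 0 then (if d \<le> a then 1 else 0) else (if a = d + (l mod Suc k - 1) then 1 else 0))"
definition wK :: "nat \<Rightarrow> nat \<Rightarrow> nat \<Rightarrow> nat \<Rightarrow> real" where
 "wK d k l b = (if l mod Suc k = 0 then (if b < d then 1 else 0) else (if d \<le> b \<and> b < d + (l mod Suc k - 1) then -1 else 0))"
definition rR :: "nat \<Rightarrow> nat \<Rightarrow> nat \<Rightarrow> nat \<Rightarrow> real" where
 "rR d k l a = (if l mod Suc k = 0 \<and> d \<le> a then -1 else 0)"

definition step :: "nat \<Rightarrow> nat \<Rightarrow> nat \<Rightarrow> real mat \<Rightarrow> real mat" where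
 "step d k l Z = normalize_rows d (Z + dg (d+k) (vV d k l) * Z * transpose_mat Z * transpose_mat (1\<^sub>m (d+k))
     * dg (d+k) (wK d k l) * Z + dg (d+k) (rR d k l) * Z)"

definition colnorm :: "real mat \<Rightarrow> real mat" where
 "colnorm M = mat (dim_row M) (dim_col M) (\<lambda>(x,j). M $$ (x,j) / sqrt (\<Sum>y<dim_row M. (M $$ (y,j))\<^sup>2))"

definition U :: "nat \<Rightarrow> real mat \<Rightarrow> nat \<Rightarrow> real" where
 "U t P x = P $$ (x,t) - (\<Sum>i<t. (\<Sum>y<dim_row P. P $$ (y,t) * P $$ (y,i)) * P $$ (x,i))"

definition gs :: "nat \<Rightarrow> real mat \<Rightarrow> real mat" where
 "gs t P = mat (dim_row P) (dim_col P) (\<lambda>(x,j). if j = t then U t P x / sqrt (\<Sum>y<dim_row P. (U t P y)\<^sup>2) else P $$ (x,j))"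

lemma init_Z_dims[simp]: "dim_row (init_Z n d k B P) = d + k" "dim_col (init_Z n d k B P) = n"
  by (auto simp: init_Z_def)

lemma init_Z_index: "a < d + k \<Longrightarrow> c < n \<Longrightarrow> init_Z n d k B P $$ (a,c) = (if a < d then B $$ (c,a) else P $$ (c, a - d))"
  by (auto simp: init_Z_def)

lemma sum_restr1: fixes d k :: nat shows "(\<Sum>b<d+k. if b < d then f b else 0) = (\<Sum>b<d. (f b::real))"
  by (rule sum.mono_neutral_cong_right) auto

lemma sum_restr2: fixes d k t :: nat assumes "t \<le> k" shows "(\<Sum>b<d+k. if d \<le> b \<and> b < d + t then f b else 0) = (\<Sum>i<t. (f (d+i)::real))"
proof -
  have "(\<Sum>b<d+k. if d \<le> b \<and> b < d + t then f b else 0) = (\<Sum>b\<in>{d..<d+t}. f b)"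
    using assms by (intro sum.mono_neutral_cong_right) auto
  also have "{d..<d+t} = (\<lambda>i. d + i) ` {..<t}"
    apply (auto simp: image_iff)
    subgoal for x by (rule bexI[of _ "x - d"]) auto
    done
  also have "sum f \<dots> = (\<Sum>i<t. f (d+i))" by (subst sum.reindex) (auto simp: inj_on_def)
  finally show ?thesis .
qed

lemma normalize_entry: "a < dim_row H \<Longrightarrow> c < dim_col H \<Longrightarrow>
  normalize_rows d H $$ (a,c) = (if a < d then H $$ (a,c) else H $$ (a,c) / row_norm H a)"
  by (simp add: normalize_rows_def)

lemma step_type0:
  assumes l: "l mod Suc k = 0" and B: "B \<in> carrier_mat n d" and P: "P \<in> carrier_mat n k"
  shows "step d k l (init_Z n d k B P) = init_Z n d k B (colnorm (B * transpose_mat B * P))"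
proof -
  let ?Z = "init_Z n d k B P"
  let ?H = "?Z + dg (d+k) (vV d k l) * ?Z * transpose_mat ?Z * transpose_mat (1\<^sub>m (d+k))
     * dg (d+k) (wK d k l) * ?Z + dg (d+k) (rR d k l) * ?Z"
  have Zc: "?Z \<in> carrier_mat (d+k) n" by auto
  have H: "?H $$ (a,c) = (if a < d then B $$ (c,a) else (B * transpose_mat B * P) $$ (c, a - d))"
    if a: "a < d + k" and c: "c < n" for a c
  proof (cases "a < d")
    case True
    then show ?thesis using layer_entry[OF Zc a c] a c l by (simp add: vV_def rR_def init_Z_index)
  next
    case False
    have "?H $$ (a,c) = (\<Sum>b<d+k. (\<Sum>x<n. ?Z $$ (a,x) * ?Z $$ (b,x)) * wK d k l b * ?Z $$ (b,c))"
      using layer_entry[OF Zc a c] False l by (simp add: vV_def rR_def)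
    also have "\<dots> = (\<Sum>b<d+k. if b < d then (\<Sum>x<n. P $$ (x, a-d) * B $$ (x,b)) * B $$ (c,b) else 0)"
      using a c False l by (intro sum.cong refl) (auto simp: wK_def init_Z_index intro!: sum.cong)
    also have "\<dots> = (\<Sum>b<d. (\<Sum>x<n. P $$ (x, a-d) * B $$ (x,b)) * B $$ (c,b))"
      by (rule sum_restr1)
    also have "\<dots> = (B * transpose_mat B * P) $$ (c, a - d)"
      using a c False B P by (auto simp: scalar_prod_def sum_distrib_left sum_distrib_right atLeast0LessThan mult_ac intro: sum.swap)
    finally show ?thesis using False by simp
  qed
  have Hd: "dim_row ?H = d + k" "dim_col ?H = n" by auto
  have LP: "B * transpose_mat B * P \<in> carrier_mat n k" using B P by auto
  show ?thesis unfolding step_def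
  proof (rule eq_matI)
    fix a c assume a: "a < dim_row (init_Z n d k B (colnorm (B * transpose_mat B * P)))"
      and c: "c < dim_col (init_Z n d k B (colnorm (B * transpose_mat B * P)))"
    then have a: "a < d + k" and c: "c < n" by auto
    have rn: "row_norm ?H a = sqrt (\<Sum>y<n. ((B * transpose_mat B * P) $$ (y, a - d))\<^sup>2)" if "\<not> a < d"
      unfolding row_norm_def Hd using H[OF a] that by (intro arg_cong[where f=sqrt] sum.cong) auto
    show "normalize_rows d ?H $$ (a, c) = init_Z n d k B (colnorm (B * transpose_mat B * P)) $$ (a, c)"
      using a c H[OF a c] rn LP B P unfolding normalize_rows_def Hd
      by (auto simp: init_Z_index colnorm_def)
  qed (auto simp: normalize_rows_def)
qed


lemma step_type1:
  assumes l: "l mod Suc k = Suc t" and t: "t < k" and B: "B \<in> carrier_mat n d" and P: "P \<in> carrier_mat n k"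
    and unit: "\<And>j. j < k \<Longrightarrow> j \<noteq> t \<Longrightarrow> (\<Sum>y<n. (P $$ (y,j))\<^sup>2) = 1"
  shows "step d k l (init_Z n d k B P) = init_Z n d k B (gs t P)"
proof -
  let ?Z = "init_Z n d k B P"
  let ?H = "?Z + dg (d+k) (vV d k l) * ?Z * transpose_mat ?Z * transpose_mat (1\<^sub>m (d+k))
     * dg (d+k) (wK d k l) * ?Z + dg (d+k) (rR d k l) * ?Z"
  have Zc: "?Z \<in> carrier_mat (d+k) n" by auto
  have H: "?H $$ (a,c) = (if a < d then B $$ (c,a) else if a = d + t then U t P c else P $$ (c, a - d))"
    if a: "a < d + k" and c: "c < n" for a c
  proof (cases "a < d")
    case True
    then show ?thesis using layer_entry[OF Zc a c] a c l by (simp add: vV_def rR_def init_Z_index)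
  next
    case False
    show ?thesis
    proof (cases "a = d + t")
      case True
      have "?H $$ (a,c) = P $$ (c,t) + (\<Sum>b<d+k. (\<Sum>x<n. ?Z $$ (a,x) * ?Z $$ (b,x)) * wK d k l b * ?Z $$ (b,c))"
        using layer_entry[OF Zc a c] False True l c t by (simp add: vV_def rR_def init_Z_index)
      also have "(\<Sum>b<d+k. (\<Sum>x<n. ?Z $$ (a,x) * ?Z $$ (b,x)) * wK d k l b * ?Z $$ (b,c))
          = (\<Sum>b<d+k. if d \<le> b \<and> b < d + t then - ((\<Sum>x<n. P $$ (x, t) * P $$ (x,b-d)) * P $$ (c,b-d)) else 0)"
        using a c True l t by (intro sum.cong refl) (auto simp: wK_def init_Z_index intro!: sum.cong)
      also have "\<dots> = (\<Sum>i<t. - ((\<Sum>x<n. P $$ (x, t) * P $$ (x,i)) * P $$ (c,i)))"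
        using t by (subst sum_restr2) auto
      finally show ?thesis using False True P by (simp add: U_def sum_negf)
    next
      case False2: False
      show ?thesis using layer_entry[OF Zc a c] False False2 l c a by (auto simp: vV_def rR_def init_Z_index)
    qed
  qed
  have Hd: "dim_row ?H = d + k" "dim_col ?H = n" by auto
  have gsc: "gs t P \<in> carrier_mat n k" using P by (auto simp: gs_def)
  show ?thesis unfolding step_def
  proof (rule eq_matI)
    fix a c assume a: "a < dim_row (init_Z n d k B (gs t P))"
      and c: "c < dim_col (init_Z n d k B (gs t P))"
    then have a: "a < d + k" and c: "c < n" by auto
    have rn1: "row_norm ?H a = sqrt (\<Sum>y<n. (U t P y)\<^sup>2)" if "a = d + t"
      unfolding row_norm_def Hd using H[OF a] that by (intro arg_cong[where f=sqrt] sum.cong) auto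
    have rn2: "row_norm ?H a = 1" if "\<not> a < d" "a \<noteq> d + t"
    proof -
      have "row_norm ?H a = sqrt (\<Sum>y<n. (P $$ (y, a - d))\<^sup>2)"
        unfolding row_norm_def Hd using H[OF a] that by (intro arg_cong[where f=sqrt] sum.cong) auto
      also have "\<dots> = 1" using unit[of "a - d"] that a by auto
      finally show ?thesis .
    qed
    have e: "normalize_rows d ?H $$ (a, c) = (if a < d then ?H $$ (a,c) else ?H $$ (a,c) / row_norm ?H a)"
      by (rule normalize_entry) (simp_all only: Hd a c)
    consider "a < d" | "a = d + t" | "\<not> a < d \<and> a \<noteq> d + t" by auto
    then show "normalize_rows d ?H $$ (a, c) = init_Z n d k B (gs t P) $$ (a, c)"
    proof cases
      case 1 then show ?thesis unfolding e H[OF a c] using a c by (simp add: init_Z_index)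
    next
      case 2 then show ?thesis unfolding e H[OF a c] rn1[OF 2] using a c P t by (simp add: init_Z_index gs_def)
    next
      case 3 then show ?thesis unfolding e H[OF a c] rn2[OF conjunct1[OF 3] conjunct2[OF 3]] using a c P t
        by (auto simp: init_Z_index gs_def)
    qed
  qed (auto simp: normalize_rows_def)
qed


definition ut :: "nat \<Rightarrow> real mat \<Rightarrow> bool" where
  "ut k A \<longleftrightarrow> A \<in> carrier_mat k k \<and> (\<forall>i<k. \<forall>j<k. j < i \<longrightarrow> A $$ (i,j) = 0) \<and> (\<forall>i<k. A $$ (i,i) > 0)"

lemma ut_mult: assumes A: "ut k A" and B: "ut k B" shows "ut k (A * B)"
proof -
  have Ac: "A \<in> carrier_mat k k" and Bc: "B \<in> carrier_mat k k" using A B by (auto simp: ut_def)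
  have low: "(A * B) $$ (i,j) = 0" if "i < k" "j < k" "j < i" for i j
  proof -
    have "(A * B) $$ (i,j) = (\<Sum>l<k. A $$ (i,l) * B $$ (l,j))"
      using Ac Bc that by (simp add: scalar_prod_def atLeast0LessThan)
    also have "\<dots> = 0"
    proof (rule sum.neutral, intro ballI)
      fix l assume "l \<in> {..<k}"
      then show "A $$ (i,l) * B $$ (l,j) = 0" using A B that unfolding ut_def
        by (cases "l < i") auto
    qed
    finally show ?thesis .
  qed
  have diag: "(A * B) $$ (i,i) > 0" if "i < k" for i
  proof -
    have "(A * B) $$ (i,i) = (\<Sum>l<k. A $$ (i,l) * B $$ (l,i))"
      using Ac Bc that by (simp add: scalar_prod_def atLeast0LessThan)
    also have "\<dots> = A $$ (i,i) * B $$ (i,i)"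
    proof (rule sum_single[OF that])
      fix l assume "l < k" "l \<noteq> i"
      then show "A $$ (i,l) * B $$ (l,i) = 0" using A B that unfolding ut_def
        by (cases "l < i") auto
    qed
    finally show ?thesis using A B that by (simp add: ut_def)
  qed
  show ?thesis using low diag Ac Bc by (auto simp: ut_def)
qed

lemma ut_orth_id: assumes T: "ut k T" and O: "transpose_mat T * T = 1\<^sub>m k" shows "T = 1\<^sub>m k"
proof -
  have Tc: "T \<in> carrier_mat k k" using T by (simp add: ut_def)
  have ent: "\<And>l j. l < k \<Longrightarrow> j < k \<Longrightarrow> (\<Sum>i<k. T $$ (i,l) * T $$ (i,j)) = (if l = j then 1 else 0)"
  proof -
    fix l j assume "l < k" "j < k"
    then have "(transpose_mat T * T) $$ (l,j) = (if l = j then 1 else 0)" using O by simp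
    then show "(\<Sum>i<k. T $$ (i,l) * T $$ (i,j)) = (if l = j then 1 else 0)"
      using Tc \<open>l < k\<close> \<open>j < k\<close> by (simp add: scalar_prod_def atLeast0LessThan)
  qed
  have main: "\<forall>j<k. T $$ (i,j) = (if i = j then 1 else 0)" if "i < k" for i
    using that
  proof (induction i rule: less_induct)
    case (less i)
    have col: "T $$ (l,i) = 0" if "l < k" "l \<noteq> i" for l
    proof (cases "l < i")
      case True then show ?thesis using less.IH[of l] that less.prems by auto
    next
      case False then show ?thesis using T that less.prems by (auto simp: ut_def)
    qed
    have red: "(\<Sum>l<k. T $$ (l,i) * T $$ (l,j)) = T $$ (i,i) * T $$ (i,j)" for j
      by (rule sum_single[OF less.prems]) (simp add: col)
    have "T $$ (i,i) * T $$ (i,i) = 1" using ent[OF less.prems less.prems] red[of i] by simp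
    moreover have "T $$ (i,i) > 0" using T less.prems by (simp add: ut_def)
    ultimately have "T $$ (i,i) = 1"
      by (metis abs_of_pos mult_cancel_right2 mult_pos_pos real_sqrt_abs2 real_sqrt_one)
    then show ?case using ent[OF less.prems] red by auto
  qed
  show ?thesis using Tc main by (intro eq_matI) auto
qed


lemma fcr_nz:
  assumes M: "M \<in> carrier_mat n k" and F: "full_col_rank M" and x: "x \<in> carrier_vec k"
    and i: "i < k" "x $ i \<noteq> 0"
  shows "(\<Sum>y<n. ((M *\<^sub>v x) $ y)\<^sup>2) > 0"
proof -
  have "x \<noteq> 0\<^sub>v k" using i x by auto
  then have "M *\<^sub>v x \<noteq> 0\<^sub>v n" using F M x unfolding full_col_rank_def by auto
  have "\<exists>y<n. (M *\<^sub>v x) $ y \<noteq> 0"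
  proof (rule ccontr)
    assume "\<not> ?thesis"
    then have "M *\<^sub>v x = 0\<^sub>v n" using M by (intro eq_vecI) auto
    then show False using \<open>M *\<^sub>v x \<noteq> 0\<^sub>v n\<close> by simp
  qed
  then obtain y where y: "y < n" "(M *\<^sub>v x) $ y \<noteq> 0" by blast
  show ?thesis by (rule sum_pos2[of _ y]) (use y in auto)
qed

definition inv_gs :: "nat \<Rightarrow> nat \<Rightarrow> real mat \<Rightarrow> nat \<Rightarrow> real mat \<Rightarrow> bool" where
  "inv_gs n k M t P \<longleftrightarrow> P \<in> carrier_mat n k \<and> (\<forall>j<k. (\<Sum>y<n. (P $$ (y,j))\<^sup>2) = 1) \<and>
    (\<forall>i<t. \<forall>j<t. i \<noteq> j \<longrightarrow> (\<Sum>y<n. P $$ (y,i) * P $$ (y,j)) = 0) \<and>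
    (\<exists>R. ut k R \<and> M = P * R) \<and> (\<exists>S. ut k S \<and> P = M * S)"

lemma mult_dg: "A \<in> carrier_mat n k \<Longrightarrow> A * dg k f = mat n k (\<lambda>(i,j). A $$ (i,j) * f j)"
  by (intro eq_matI) (auto simp: dg_def scalar_prod_def sum_delta_mult')

lemma inv0:
  assumes M: "M \<in> carrier_mat n k" and F: "full_col_rank M"
  shows "inv_gs n k M 0 (colnorm M)"
proof -
  define c where "c j = sqrt (\<Sum>y<n. (M $$ (y,j))\<^sup>2)" for j
  have cpos: "c j > 0" if "j < k" for j
  proof -
    have "(\<Sum>y<n. ((M *\<^sub>v unit_vec k j) $ y)\<^sup>2) > 0"
      by (rule fcr_nz[OF M F _ that]) (use that in auto)
    moreover have "(M *\<^sub>v unit_vec k j) $ y = M $$ (y,j)" if "y < n" for y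
      using M that \<open>j < k\<close> by (simp add: scalar_prod_def sum_delta_mult' atLeast0LessThan)
    ultimately show ?thesis unfolding c_def by simp
  qed
  have P: "colnorm M = mat n k (\<lambda>(x,j). M $$ (x,j) / c j)" using M by (auto simp: colnorm_def c_def)
  have Pc: "colnorm M \<in> carrier_mat n k" using P by simp
  have unit: "(\<Sum>y<n. (colnorm M $$ (y,j))\<^sup>2) = 1" if "j < k" for j
  proof -
    have "(\<Sum>y<n. (colnorm M $$ (y,j))\<^sup>2) = (\<Sum>y<n. (M $$ (y,j))\<^sup>2) / (c j)\<^sup>2"
      unfolding P using that by (simp add: power_divide sum_divide_distrib)
    also have "\<dots> = 1" using cpos[OF that] unfolding c_def by simp
    finally show ?thesis .
  qed
  have R: "ut k (dg k c)" using cpos by (auto simp: ut_def dg_def)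
  have S: "ut k (dg k (\<lambda>j. 1 / c j))" using cpos by (auto simp: ut_def dg_def)
  have e1: "M = colnorm M * dg k c"
    unfolding mult_dg[OF Pc] using M cpos by (intro eq_matI) (auto simp: P dest: cpos)
  have e2: "colnorm M = M * dg k (\<lambda>j. 1 / c j)"
    using M cpos by (intro eq_matI) (auto simp: P mult_dg)
  show ?thesis unfolding inv_gs_def using Pc unit R S e1 e2 by blast
qed

lemma inv_final:
  assumes M: "M \<in> carrier_mat n k" and I: "inv_gs n k M k P"
  shows "QR_Q M = P"
proof -
  from I obtain R S where Pc: "P \<in> carrier_mat n k" and R: "ut k R" "M = P * R" and S: "ut k S" "P = M * S"
    and unit: "\<forall>j<k. (\<Sum>y<n. (P $$ (y,j))\<^sup>2) = 1"
    and orth: "\<forall>i<k. \<forall>j<k. i \<noteq> j \<longrightarrow> (\<Sum>y<n. P $$ (y,i) * P $$ (y,j)) = 0"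
    unfolding inv_gs_def by blast
  have Rc: "R \<in> carrier_mat k k" and Sc: "S \<in> carrier_mat k k" using R S by (auto simp: ut_def)
  have PtP: "transpose_mat P * P = 1\<^sub>m k"
  proof (rule eq_matI)
    fix i j assume "i < dim_row (1\<^sub>m k)" "j < dim_col (1\<^sub>m k)"
    then have i: "i < k" and j: "j < k" by auto
    have "(transpose_mat P * P) $$ (i,j) = (\<Sum>y<n. P $$ (y,i) * P $$ (y,j))"
      using Pc i j by (simp add: scalar_prod_def atLeast0LessThan)
    then show "(transpose_mat P * P) $$ (i,j) = 1\<^sub>m k $$ (i,j)"
      using unit orth i j by (auto simp: power2_eq_square)
  qed (use Pc in auto)
  have QR: "is_QR M P R" unfolding is_QR_def using M Pc Rc R PtP by (auto simp: ut_def)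
  have uniq: "Q = P" if "is_QR M Q R2" for Q R2
  proof -
    have Qc: "Q \<in> carrier_mat n k" and R2c: "R2 \<in> carrier_mat k k" and QtQ: "transpose_mat Q * Q = 1\<^sub>m k"
      and MQ: "M = Q * R2" using that M unfolding is_QR_def by auto
    have R2: "ut k R2" using that M unfolding is_QR_def ut_def by auto
    define T where "T = R2 * S"
    have T: "ut k T" unfolding T_def by (rule ut_mult[OF R2 S(1)])
    have Tc: "T \<in> carrier_mat k k" using T by (simp add: ut_def)
    have PQT: "P = Q * T" using S(2) MQ Qc R2c Sc unfolding T_def by simp
    have "transpose_mat T * T = transpose_mat T * (transpose_mat Q * Q) * T"
      using QtQ Tc by simp
    also have "\<dots> = transpose_mat T * ((transpose_mat Q * Q) * T)"
      by (rule assoc_mult_mat) (use Qc Tc in auto)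
    also have "(transpose_mat Q * Q) * T = transpose_mat Q * (Q * T)"
      by (rule assoc_mult_mat) (use Qc Tc in auto)
    also have "transpose_mat T * (transpose_mat Q * (Q * T)) = transpose_mat T * transpose_mat Q * (Q * T)"
      by (rule assoc_mult_mat[symmetric]) (use Qc Tc in auto)
    also have "\<dots> = transpose_mat (Q * T) * (Q * T)"
      by (simp add: transpose_mult[OF Qc Tc])
    also have "\<dots> = 1\<^sub>m k" using PtP PQT by simp
    finally have "T = 1\<^sub>m k" by (rule ut_orth_id[OF T])
    then show ?thesis using PQT Qc by simp
  qed
  show ?thesis unfolding QR_Q_def
  proof (rule the_equality)
    show "\<exists>R. is_QR M P R" using QR by blast
  next
    fix Q assume "\<exists>R. is_QR M Q R" then show "Q = P" using uniq by blast
  qed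
qed


lemma split_sum:
  fixes g f :: "nat \<Rightarrow> real"
  assumes "t < k"
  shows "(\<Sum>l<k. g l * (if l < t then f l else if l = t then h else 0)) = (\<Sum>l<t. g l * f l) + g t * h"
proof -
  have "(\<Sum>l<k. g l * (if l < t then f l else if l = t then h else 0))
      = (\<Sum>l<Suc t. g l * (if l < t then f l else if l = t then h else 0))"
    using assms by (intro sum.mono_neutral_cong_right) auto
  also have "\<dots> = (\<Sum>l<t. g l * f l) + g t * h" by simp
  finally show ?thesis .
qed

lemma inv_step:
  assumes M: "M \<in> carrier_mat n k" and F: "full_col_rank M" and I: "inv_gs n k M t P" and t: "t < k"
  shows "inv_gs n k M (Suc t) (gs t P)"
proof -
  from I obtain R S where Pc: "P \<in> carrier_mat n k" and R: "ut k R" "M = P * R" and S: "ut k S" "P = M * S"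
    and unit: "\<forall>j<k. (\<Sum>y<n. (P $$ (y,j))\<^sup>2) = 1"
    and orth: "\<forall>i<t. \<forall>j<t. i \<noteq> j \<longrightarrow> (\<Sum>y<n. P $$ (y,i) * P $$ (y,j)) = 0"
    unfolding inv_gs_def by blast
  have Rc: "R \<in> carrier_mat k k" and Sc: "S \<in> carrier_mat k k" using R S by (auto simp: ut_def)
  define a where "a i = (\<Sum>y<n. P $$ (y,t) * P $$ (y,i))" for i
  have Ux: "U t P x = P $$ (x,t) - (\<Sum>i<t. a i * P $$ (x,i))" for x
    using Pc by (simp add: U_def a_def)
  define wv where "wv = vec k (\<lambda>l. if l < t then - a l else if l = t then 1 else (0::real))"
  have wvc: "wv \<in> carrier_vec k" by (simp add: wv_def)
  have Uv: "U t P x = (P *\<^sub>v wv) $ x" if "x < n" for x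
  proof -
    have "(P *\<^sub>v wv) $ x = (\<Sum>l<k. P $$ (x,l) * (if l < t then - a l else if l = t then 1 else 0))"
      using Pc that by (simp add: scalar_prod_def wv_def atLeast0LessThan)
    also have "\<dots> = (\<Sum>l<t. P $$ (x,l) * (- a l)) + P $$ (x,t) * 1" by (rule split_sum[OF t])
    finally show ?thesis by (simp add: Ux sum_negf mult_ac)
  qed
  have Sw: "(S *\<^sub>v wv) $ t = S $$ (t,t)"
  proof -
    have "(S *\<^sub>v wv) $ t = (\<Sum>l<k. S $$ (t,l) * (if l < t then - a l else if l = t then 1 else 0))"
      using Sc t by (simp add: scalar_prod_def wv_def atLeast0LessThan)
    also have "\<dots> = (\<Sum>l<t. S $$ (t,l) * (- a l)) + S $$ (t,t) * 1" by (rule split_sum[OF t])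
    also have "(\<Sum>l<t. S $$ (t,l) * (- a l)) = 0" using S(1) t by (intro sum.neutral) (auto simp: ut_def)
    finally show ?thesis by simp
  qed
  have PwMS: "P *\<^sub>v wv = M *\<^sub>v (S *\<^sub>v wv)" using S(2) M Sc wvc by simp
  have "(\<Sum>y<n. ((M *\<^sub>v (S *\<^sub>v wv)) $ y)\<^sup>2) > 0"
    by (rule fcr_nz[OF M F _ t]) (use Sw S(1) Sc wvc t in \<open>auto simp: ut_def\<close>)
  then have sumU: "(\<Sum>y<n. (U t P y)\<^sup>2) > 0" using Uv PwMS by simp
  define c where "c = sqrt (\<Sum>y<n. (U t P y)\<^sup>2)"
  have cpos: "c > 0" using sumU by (simp add: c_def)
  have c2: "c\<^sup>2 = (\<Sum>y<n. (U t P y)\<^sup>2)" using sumU by (simp add: c_def)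
  have G: "gs t P = mat n k (\<lambda>(x,j). if j = t then U t P x / c else P $$ (x,j))"
  proof -
    have dP: "dim_row P = n" "dim_col P = k" using Pc by auto
    show ?thesis unfolding gs_def c_def dP by simp
  qed
  have Gc: "gs t P \<in> carrier_mat n k" using G by simp
  define Fm where "Fm = mat k k (\<lambda>(i,j). if j = t then (if i < t then - a i / c else if i = t then 1 / c else 0) else (if i = j then 1 else (0::real)))"
  define Em where "Em = mat k k (\<lambda>(i,j). if j = t then (if i < t then a i else if i = t then c else 0) else (if i = j then 1 else (0::real)))"
  have Fut: "ut k Fm" using cpos by (auto simp: ut_def Fm_def)
  have Eut: "ut k Em" using cpos by (auto simp: ut_def Em_def)
  have Fc: "Fm \<in> carrier_mat k k" and Ec: "Em \<in> carrier_mat k k" by (auto simp: Fm_def Em_def)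
  have GPF: "gs t P = P * Fm"
  proof (rule eq_matI)
    fix x j assume "x < dim_row (P * Fm)" "j < dim_col (P * Fm)"
    then have x: "x < n" and j: "j < k" using Pc Fc by auto
    show "gs t P $$ (x,j) = (P * Fm) $$ (x,j)"
    proof (cases "j = t")
      case True
      have "(P * Fm) $$ (x,j) = (\<Sum>l<k. P $$ (x,l) * (if l < t then - a l / c else if l = t then 1 / c else 0))"
        using Pc Fc x j True by (simp add: scalar_prod_def Fm_def atLeast0LessThan)
      also have "\<dots> = (\<Sum>l<t. P $$ (x,l) * (- a l / c)) + P $$ (x,t) * (1 / c)" by (rule split_sum[OF t])
      also have "\<dots> = U t P x / c" unfolding Ux
        by (simp add: diff_divide_distrib sum_divide_distrib sum_negf mult_ac)
      finally show ?thesis using G x j True by simp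
    next
      case False
      have "(P * Fm) $$ (x,j) = (\<Sum>l<k. P $$ (x,l) * Fm $$ (l,j))"
        using Pc Fc x j by (simp add: scalar_prod_def atLeast0LessThan)
      also have "\<dots> = (\<Sum>l<k. P $$ (x,l) * (if l = j then 1 else 0))"
        using False j by (intro sum.cong) (auto simp: Fm_def)
      also have "\<dots> = P $$ (x,j)" using j by (simp add: sum_delta_mult')
      finally show ?thesis using G x j False by simp
    qed
  qed (use Pc Fc Gc in auto)
  have PGE: "P = gs t P * Em"
  proof (rule eq_matI)
    fix x j assume "x < dim_row (gs t P * Em)" "j < dim_col (gs t P * Em)"
    then have x: "x < n" and j: "j < k" using Gc Ec by auto
    show "P $$ (x,j) = (gs t P * Em) $$ (x,j)"
    proof (cases "j = t")
      case True
      have "(gs t P * Em) $$ (x,j) = (\<Sum>l<k. gs t P $$ (x,l) * (if l < t then a l else if l = t then c else 0))"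
        using Gc Ec x j True by (simp add: scalar_prod_def Em_def atLeast0LessThan)
      also have "\<dots> = (\<Sum>l<t. gs t P $$ (x,l) * a l) + gs t P $$ (x,t) * c" by (rule split_sum[OF t])
      also have "(\<Sum>l<t. gs t P $$ (x,l) * a l) = (\<Sum>l<t. a l * P $$ (x,l))"
        using G x t by (intro sum.cong) auto
      also have "gs t P $$ (x,t) * c = U t P x" using G x t cpos by simp
      finally show ?thesis unfolding Ux using True by simp
    next
      case False
      have "(gs t P * Em) $$ (x,j) = (\<Sum>l<k. gs t P $$ (x,l) * Em $$ (l,j))"
        using Gc Ec x j by (simp add: scalar_prod_def atLeast0LessThan)
      also have "\<dots> = (\<Sum>l<k. gs t P $$ (x,l) * (if l = j then 1 else 0))"
        using False j by (intro sum.cong) (auto simp: Em_def)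
      also have "\<dots> = gs t P $$ (x,j)" using j by (simp add: sum_delta_mult')
      finally show ?thesis using G x j False by simp
    qed
  qed (use Pc Ec Gc in auto)
  have newR: "M = gs t P * (Em * R)"
  proof -
    have "M = (gs t P * Em) * R" using R(2) PGE by simp
    also have "\<dots> = gs t P * (Em * R)" by (rule assoc_mult_mat[OF Gc Ec Rc])
    finally show ?thesis .
  qed
  have newS: "gs t P = M * (S * Fm)"
  proof -
    have "gs t P = (M * S) * Fm" using S(2) GPF by simp
    also have "\<dots> = M * (S * Fm)" by (rule assoc_mult_mat[OF M Sc Fc])
    finally show ?thesis .
  qed
  have Gent: "gs t P $$ (y,j) = (if j = t then U t P y / c else P $$ (y,j))" if "y < n" "j < k" for y j
    using G that by simp
  have unit': "(\<Sum>y<n. (gs t P $$ (y,j))\<^sup>2) = 1" if j: "j < k" for j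
  proof (cases "j = t")
    case True
    have "(\<Sum>y<n. (gs t P $$ (y,j))\<^sup>2) = (\<Sum>y<n. (U t P y)\<^sup>2) / c\<^sup>2"
      using Gent j True by (simp add: power_divide sum_divide_distrib)
    then show ?thesis using c2 cpos sumU by simp
  next
    case False
    then show ?thesis using Gent j unit by simp
  qed
  have pp: "(\<Sum>y<n. P $$ (y,l) * P $$ (y,i)) = (if l = i then 1 else 0)" if "l < t" "i < t" for l i
    using unit orth that t by (auto simp: power2_eq_square)
  have Uorth: "(\<Sum>y<n. U t P y * P $$ (y,i)) = 0" if i: "i < t" for i
  proof -
    have "(\<Sum>y<n. U t P y * P $$ (y,i)) = (\<Sum>y<n. P $$ (y,t) * P $$ (y,i)) - (\<Sum>y<n. \<Sum>l<t. a l * (P $$ (y,l) * P $$ (y,i)))"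
      unfolding Ux by (simp add: left_diff_distrib sum_subtractf sum_distrib_right mult.assoc)
    also have "(\<Sum>y<n. P $$ (y,t) * P $$ (y,i)) = a i" by (simp add: a_def)
    also have "(\<Sum>y<n. \<Sum>l<t. a l * (P $$ (y,l) * P $$ (y,i))) = (\<Sum>l<t. a l * (\<Sum>y<n. P $$ (y,l) * P $$ (y,i)))"
      by (subst sum.swap) (simp add: sum_distrib_left)
    also have "\<dots> = (\<Sum>l<t. a l * (if l = i then 1 else 0))"
      using pp i by (intro sum.cong) auto
    also have "\<dots> = a i" using i by (simp add: sum_delta_mult')
    finally show ?thesis by simp
  qed
  have orth': "(\<Sum>y<n. gs t P $$ (y,i) * gs t P $$ (y,j)) = 0" if hij: "i < Suc t" "j < Suc t" "i \<noteq> j" for i j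
  proof -
    consider "i < t" "j < t" | "i = t" "j < t" | "i < t" "j = t" using hij by linarith
    then show ?thesis
    proof cases
      case 1 then show ?thesis using orth Gent t hij by simp
    next
      case 2
      have "(\<Sum>y<n. gs t P $$ (y,i) * gs t P $$ (y,j)) = (\<Sum>y<n. U t P y * P $$ (y,j)) / c"
        using 2 Gent t by (simp add: sum_divide_distrib)
      then show ?thesis using Uorth[OF 2(2)] by simp
    next
      case 3
      have "(\<Sum>y<n. gs t P $$ (y,i) * gs t P $$ (y,j)) = (\<Sum>y<n. U t P y * P $$ (y,i)) / c"
        using 3 Gent t by (simp add: sum_divide_distrib mult_ac)
      then show ?thesis using Uorth[OF 3(1)] by simp
    qed
  qed
  show ?thesis unfolding inv_gs_def
    using Gc unit' orth' newR newS ut_mult[OF Eut R(1)] ut_mult[OF S(1) Fut] by blast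
qed


primrec gsit :: "nat \<Rightarrow> real mat \<Rightarrow> real mat" where
  "gsit 0 M = colnorm M"
| "gsit (Suc t) M = gs t (gsit t M)"

lemma B_part_init: "B \<in> carrier_mat n d \<Longrightarrow> B_part d (init_Z n d k B P) = B"
  by (intro eq_matI) (auto simp: B_part_def init_Z_index)

lemma Phi_part_init: "P \<in> carrier_mat n k \<Longrightarrow> Phi_part d k (init_Z n d k B P) = P"
  by (intro eq_matI) (auto simp: Phi_part_def init_Z_index)

theorem lemma6:
  fixes n d k :: nat
  assumes "n \<ge> 1" and "d \<ge> 1" and "k \<ge> 1"
  shows "\<exists>WV WQ WK WR :: nat \<Rightarrow> real mat.
     (\<forall>l. WV l \<in> carrier_mat (d + k) (d + k) \<and> WQ l \<in> carrier_mat (d + k) (d + k) \<and>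
          WK l \<in> carrier_mat (d + k) (d + k) \<and> WR l \<in> carrier_mat (d + k) (d + k)) \<and>
     (\<forall>src tgt r Phi0.
        is_conn_graph n d src tgt r \<longrightarrow> Phi0 \<in> carrier_mat n k \<longrightarrow> full_col_rank Phi0 \<longrightarrow>
        (let B = incidence_mat n d src tgt r; Lap = B * transpose_mat B;
             Z = tf_state d WV WQ WK WR (init_Z n d k B Phi0) in
         (\<forall>m. full_col_rank (Lap * subspace_iter Lap Phi0 m)) \<longrightarrow>
         (\<forall>m. B_part d (Z ((k + 1) * m)) = B \<and>
              Phi_part d k (Z ((k + 1) * m)) = subspace_iter Lap Phi0 m)))"
proof (intro exI conjI allI impI)
  let ?WV = "\<lambda>l. dg (d+k) (vV d k l)" and ?WQ = "\<lambda>l::nat. 1\<^sub>m (d+k) :: real mat"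
    and ?WK = "\<lambda>l. dg (d+k) (wK d k l)" and ?WR = "\<lambda>l. dg (d+k) (rR d k l)"
  fix l
  show "?WV l \<in> carrier_mat (d + k) (d + k)" "?WQ l \<in> carrier_mat (d + k) (d + k)"
    "?WK l \<in> carrier_mat (d + k) (d + k)" "?WR l \<in> carrier_mat (d + k) (d + k)" by auto
next
  let ?WV = "\<lambda>l. dg (d+k) (vV d k l)" and ?WQ = "\<lambda>l::nat. 1\<^sub>m (d+k) :: real mat"
    and ?WK = "\<lambda>l. dg (d+k) (wK d k l)" and ?WR = "\<lambda>l. dg (d+k) (rR d k l)"
  fix src tgt :: "nat \<Rightarrow> nat" and r :: "nat \<Rightarrow> real" and Phi0 :: "real mat"
  assume Phi0: "Phi0 \<in> carrier_mat n k"
  define B where "B = incidence_mat n d src tgt r"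
  define Lap where "Lap = B * transpose_mat B"
  define Zs where "Zs = tf_state d ?WV ?WQ ?WK ?WR (init_Z n d k B Phi0)"
  have Bc: "B \<in> carrier_mat n d" by (simp add: B_def incidence_mat_def)
  have ZS: "Zs (Suc l) = step d k l (Zs l)" for l by (simp add: Zs_def step_def Let_def)
  show "let B = incidence_mat n d src tgt r; Lap = B * transpose_mat B;
             Z = tf_state d ?WV ?WQ ?WK ?WR (init_Z n d k B Phi0) in
         (\<forall>m. full_col_rank (Lap * subspace_iter Lap Phi0 m)) \<longrightarrow>
         (\<forall>m. B_part d (Z ((k + 1) * m)) = B \<and>
              Phi_part d k (Z ((k + 1) * m)) = subspace_iter Lap Phi0 m)"
    unfolding Let_def B_def[symmetric] Lap_def[symmetric] Zs_def[symmetric]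
  proof (intro impI allI)
    assume FR: "\<forall>m. full_col_rank (Lap * subspace_iter Lap Phi0 m)"
    have main: "Zs ((k+1) * m) = init_Z n d k B (subspace_iter Lap Phi0 m) \<and> subspace_iter Lap Phi0 m \<in> carrier_mat n k" for m
    proof (induction m)
      case 0
      then show ?case using Phi0 by (simp add: Zs_def)
    next
      case (Suc m)
      define M where "M = Lap * subspace_iter Lap Phi0 m"
      have Lc: "Lap \<in> carrier_mat n n" using Bc by (simp add: Lap_def)
      have Mc: "M \<in> carrier_mat n k" unfolding M_def using Suc.IH by (intro mult_carrier_mat[OF Lc]) simp
      have FM: "full_col_rank M" using FR by (simp add: M_def)
      have sub: "Zs ((k+1) * m + Suc t) = init_Z n d k B (gsit t M) \<and> inv_gs n k M t (gsit t M)" if "t \<le> k" for t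
        using that
      proof (induction t)
        case 0
        have "((k+1) * m) mod Suc k = 0" using mod_mult_self1_is_0[of "Suc k" m] by simp
        then have "Zs ((k+1) * m + Suc 0) = init_Z n d k B (colnorm M)"
          using ZS[of "(k+1)*m"] Suc.IH step_type0[OF _ Bc] by (simp add: M_def Lap_def)
        then show ?case using inv0[OF Mc FM] by simp
      next
        case (Suc t)
        then have IH: "Zs ((k+1) * m + Suc t) = init_Z n d k B (gsit t M)" "inv_gs n k M t (gsit t M)" and tk: "t < k"
          by auto
        have md: "((k+1) * m + Suc t) mod Suc k = Suc t" using tk mod_mult_self4[of "Suc k" m "Suc t"] by simp
        have Pc: "gsit t M \<in> carrier_mat n k" using IH(2) by (simp add: inv_gs_def)
        have un: "\<And>j. j < k \<Longrightarrow> j \<noteq> t \<Longrightarrow> (\<Sum>y<n. (gsit t M $$ (y,j))\<^sup>2) = 1"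
          using IH(2) by (simp add: inv_gs_def)
        have "Zs ((k+1) * m + Suc (Suc t)) = init_Z n d k B (gsit (Suc t) M)"
          using ZS[of "(k+1) * m + Suc t"] IH(1) step_type1[OF md tk Bc Pc un] by simp
        then show ?case using inv_step[OF Mc FM IH(2) tk] by simp
      qed
      from sub[of k] have Z1: "Zs ((k+1) * m + Suc k) = init_Z n d k B (gsit k M)" and I: "inv_gs n k M k (gsit k M)" by auto
      have si: "subspace_iter Lap Phi0 (Suc m) = gsit k M"
        using inv_final[OF Mc I] by (simp add: M_def)
      have eq: "(k+1) * Suc m = (k+1) * m + Suc k" by simp
      have Z2: "Zs ((k+1) * Suc m) = init_Z n d k B (gsit k M)" unfolding eq by (rule Z1)
      show ?case unfolding si using Z2 I by (simp add: inv_gs_def)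
    qed
    fix m
    show "B_part d (Zs ((k + 1) * m)) = B \<and> Phi_part d k (Zs ((k + 1) * m)) = subspace_iter Lap Phi0 m"
      using main[of m] B_part_init[OF Bc] Phi_part_init by simp
  qed
qed

end
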